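(* Let $(b_n)_{n=0}^\infty$ be a sequence with $b_n>0$, $b_0=1$ and $b_{n+1}/b_n\ge b$ for all $n$, for some $b>1$. Fix $C>0$. Then for every $\epsilon_0>0$ there is $\delta_0>0$ such that the following holds for every $\delta\in(0,\delta_0)$: if $A\subseteq[0,1]^2$ can be covered by $N\le C/\delta$ squares with horizontal and vertical sides of length $\delta$, then there exist $\gamma$ with $0<\gamma<\min\{1,\tfrac1b+\epsilon_0\}$ and $\tilde C>0$ such that for every sequence $\underline{\Theta}=(\underline{\theta_1},\underline{\theta_2},\dots)$ with $\underline{\theta_j}\in\mathbb{R}^2$ and every $n>0$, $$\mathcal{L}(\mathcal{A}_n(\underline{\Theta}))<\tilde C\gamma^n.$$
   Context: $\mathcal{L}$ denotes Lebesgue measure on $\mathbb{R}^2$. For $A\subseteq[0,1]^2$ let $\mathcal{A}=\bigcup_{n,m\in\mathbb{Z}}(A+(n,m))$. For $j\ge1$ and $\underline{\theta_j}\in\mathbb{R}^2$ let $\frac{\mathcal{A}-\underline{\theta_j}}{b_j}=\{(x,y): (b_jx,b_jy)+\underline{\theta_j}\in\mathcal{A}\}$, and define $$\mathcal{A}_n(\underline{\Theta})=[0,1]^2\cap\mathcal{A}\cap\frac{\mathcal{A}-\underline{\theta_1}}{b_1}\cap\frac{\mathcal{A}-\underline{\theta_2}}{b_2}\cap\dots\cap\frac{\mathcal{A}-\underline{\theta_n}}{b_n}.$$ *)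

theory Defs
  imports "HOL-Analysis.Analysis"
begin

definition periodize :: "(real \<times> real) set \<Rightarrow> (real \<times> real) set" where
  "periodize A = (\<Union>n::int. \<Union>m::int. (\<lambda>p. p + (of_int n, of_int m)) ` A)"

definition scaled_shift :: "(real \<times> real) set \<Rightarrow> real \<Rightarrow> real \<times> real \<Rightarrow> (real \<times> real) set" where
  "scaled_shift S c \<theta> = {(x, y). (c * x, c * y) + \<theta> \<in> S}"

definition A_n :: "(real \<times> real) set \<Rightarrow> (nat \<Rightarrow> real) \<Rightarrow> (nat \<Rightarrow> real \<times> real) \<Rightarrow> nat \<Rightarrow> (real \<times> real) set" where
  "A_n A b \<Theta> n = ({0..1} \<times> {0..1}) \<inter> periodize A \<inter>
      (\<Inter>j\<in>{1..n}. scaled_shift (periodize A) (b j) (\<Theta> j))"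

definition covered_by_squares :: "(real \<times> real) set \<Rightarrow> real \<Rightarrow> nat \<Rightarrow> bool" where
  "covered_by_squares A \<delta> N \<longleftrightarrow> (\<exists>P :: (real \<times> real) set. finite P \<and> card P \<le> N \<and>
      A \<subseteq> (\<Union>p\<in>P. {fst p .. fst p + \<delta>} \<times> {snd p .. snd p + \<delta>}))"

text \<open>Lebesgue (outer) measure on the plane; agrees with Lebesgue measure on measurable sets.\<close>
definition leb2 :: "(real \<times> real) set \<Rightarrow> real" where
  "leb2 S = (INF T\<in>{T. T \<in> sets lebesgue \<and> S \<subseteq> T \<and> emeasure lebesgue T < \<infinity>}. measure lebesgue T)"

end

theory Submission
  imports Defs
begin

definition sq :: "real \<times> real \<Rightarrow> real \<Rightarrow> (real \<times> real) set" where
  "sq p s = {fst p..fst p+s} \<times> {snd p..snd p+s}"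

lemma sq_cbox: "sq p s = cbox p (fst p + s, snd p + s)"
  by (cases p) (simp add: sq_def cbox_Pair_eq)

lemma sq_lmeas: "sq p s \<in> lmeasurable"
  by (simp add: sq_cbox)

lemma sq_measure: assumes "s \<ge> 0" shows "measure lebesgue (sq p s) = s^2"
proof -
  have "measure lborel (sq p s) = s^2"
    unfolding sq_cbox using assms by (cases p) (simp add: content_Pair power2_eq_square)
  thus ?thesis by (simp add: sq_cbox)
qed

lemma cover_measure:
  assumes "finite Q" "S \<subseteq> (\<Union>q\<in>Q. sq q s)" "s \<ge> 0"
  shows "leb2 S \<le> real (card Q) * s^2"
proof -
  define T where "T = (\<Union>q\<in>Q. sq q s)"
  have Tl: "T \<in> lmeasurable" unfolding T_def
    using assms(1) by (intro fmeasurable.finite_UN) (auto simp: sq_lmeas)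
  hence "T \<in> {T. T \<in> sets lebesgue \<and> S \<subseteq> T \<and> emeasure lebesgue T < \<infinity>}"
    using assms(2) by (auto simp: T_def fmeasurable_def)
  hence "leb2 S \<le> measure lebesgue T" unfolding leb2_def
    by (intro cINF_lower) (auto intro: bdd_belowI[where m=0])
  also have "measure lebesgue T \<le> (\<Sum>q\<in>Q. measure lebesgue (sq q s))"
    unfolding T_def using assms(1) by (intro measure_UNION_le) (auto simp: sq_lmeas fmeasurableD)
  also have "\<dots> = real (card Q) * s^2" using assms(3) by (simp add: sq_measure)
  finally show ?thesis .
qed

lemma intcount:
  fixes a b :: real assumes "a \<le> b"
  shows "finite {n::int. a \<le> real_of_int n \<and> real_of_int n \<le> b}"
    and "real (card {n::int. a \<le> real_of_int n \<and> real_of_int n \<le> b}) \<le> b - a + 1"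
proof -
  have e: "{n::int. a \<le> real_of_int n \<and> real_of_int n \<le> b} = {\<lceil>a\<rceil>..\<lfloor>b\<rfloor>}"
    by (auto simp: ceiling_le_iff le_floor_iff)
  show "finite {n::int. a \<le> real_of_int n \<and> real_of_int n \<le> b}" unfolding e by simp
  have "real (nat (\<lfloor>b\<rfloor> - \<lceil>a\<rceil> + 1)) \<le> b - a + 1"
  proof (cases "\<lfloor>b\<rfloor> - \<lceil>a\<rceil> + 1 \<ge> 0")
    case True
    hence "real (nat (\<lfloor>b\<rfloor> - \<lceil>a\<rceil> + 1)) = real_of_int (\<lfloor>b\<rfloor> - \<lceil>a\<rceil> + 1)" by simp
    also have "\<dots> \<le> b - a + 1" using of_int_floor_le[of b] le_of_int_ceiling[of a] by (simp; linarith)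
    finally show ?thesis .
  next
    case False thus ?thesis using assms by simp
  qed
  thus "real (card {n::int. a \<le> real_of_int n \<and> real_of_int n \<le> b}) \<le> b - a + 1"
    unfolding e by simp
qed

lemma key:
  fixes A X PA P :: "(real \<times> real) set" and \<theta> :: "real \<times> real"
  assumes fPA: "finite PA" and cPA: "card PA \<le> N" and Acov: "A \<subseteq> (\<Union>a\<in>PA. sq a \<delta>)"
    and d0: "0 < \<delta>" and d1: "\<delta> \<le> 1" and c: "c > 0" and s: "s \<ge> 0"
    and fP: "finite P" and Xcov: "X \<subseteq> (\<Union>p\<in>P. sq p s)"
  shows "\<exists>Q. finite Q \<and> real (card Q) \<le> real (card P) * real N * (c * s+2)^2 \<and>
      X \<inter> scaled_shift (periodize A) c \<theta> \<subseteq> (\<Union>q\<in>Q. sq q (\<delta>/c))"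
proof -
  define I where "I u v w = {n::int. u - v + w - \<delta> \<le> real_of_int n \<and> real_of_int n \<le> u - v + w - \<delta> + (c * s+\<delta>)}" for u v w :: real
  define F where "F a = (\<lambda>(n::int,m::int). ((fst a + real_of_int n - fst \<theta>)/c, (snd a + real_of_int m - snd \<theta>)/c))" for a :: "real \<times> real"
  define J where "J p a = I (c*fst p) (fst a) (fst \<theta>) \<times> I (c * snd p) (snd a) (snd \<theta>)" for p a :: "real \<times> real"
  define Q where "Q = (\<Union>p\<in>P. \<Union>a\<in>PA. F a ` J p a)"
  have cs0: "c * s \<ge> 0" using c s by simp
  have Ifin: "finite (I u v w)" for u v w
    unfolding I_def using cs0 d0 by (intro intcount(1)) simp
  have Icard: "real (card (I u v w)) \<le> c * s+2" for u v w
  proof -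
    have "real (card (I u v w)) \<le> (u - v + w - \<delta> + (c * s+\<delta>)) - (u - v + w - \<delta>) + 1"
      unfolding I_def using cs0 d0 by (intro intcount(2)) simp
    thus ?thesis using d1 by simp
  qed
  have Jfin: "finite (J p a)" for p a unfolding J_def using Ifin by simp
  have Jcard: "real (card (J p a)) \<le> (c * s+2)^2" for p a
  proof -
    have "real (card (J p a)) = real (card (I (c*fst p) (fst a) (fst \<theta>))) * real (card (I (c * snd p) (snd a) (snd \<theta>)))"
      unfolding J_def by (simp add: card_cartesian_product)
    also have "\<dots> \<le> (c * s+2) * (c * s+2)"
      using Icard cs0 by (intro mult_mono) auto
    finally show ?thesis by (simp add: power2_eq_square)
  qed
  have Qfin: "finite Q" unfolding Q_def using fP fPA Jfin by auto
  have "card Q \<le> (\<Sum>p\<in>P. card (\<Union>a\<in>PA. F a ` J p a))"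
    unfolding Q_def by (rule card_UN_le[OF fP])
  also have "\<dots> \<le> (\<Sum>p\<in>P. \<Sum>a\<in>PA. card (F a ` J p a))"
    by (intro sum_mono card_UN_le[OF fPA])
  also have "\<dots> \<le> (\<Sum>p\<in>P. \<Sum>a\<in>PA. card (J p a))"
    by (intro sum_mono card_image_le Jfin)
  finally have "real (card Q) \<le> real (\<Sum>p\<in>P. \<Sum>a\<in>PA. card (J p a))" by linarith
  also have "\<dots> = (\<Sum>p\<in>P. \<Sum>a\<in>PA. real (card (J p a)))" by simp
  also have "\<dots> \<le> (\<Sum>p\<in>P. \<Sum>a\<in>PA. (c * s+2)^2)"
    by (intro sum_mono Jcard)
  also have "\<dots> = real (card P) * real (card PA) * (c * s+2)^2" by simp
  also have "\<dots> \<le> real (card P) * real N * (c * s+2)^2"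
    using cPA by (intro mult_right_mono mult_left_mono) auto
  finally have Qcard: "real (card Q) \<le> real (card P) * real N * (c * s+2)^2" .
  have "X \<inter> scaled_shift (periodize A) c \<theta> \<subseteq> (\<Union>q\<in>Q. sq q (\<delta>/c))"
  proof
    fix z assume z: "z \<in> X \<inter> scaled_shift (periodize A) c \<theta>"
    obtain x y where zxy: "z = (x,y)" by (cases z)
    obtain p where pP: "p \<in> P" and zp: "z \<in> sq p s" using z Xcov by auto
    from z have "(c*x, c*y) + \<theta> \<in> periodize A" by (simp add: zxy scaled_shift_def)
    then obtain n m :: int and a' where a'A: "a' \<in> A" and eq: "(c*x, c*y) + \<theta> = a' + (of_int n, of_int m)"
      unfolding periodize_def by auto
    obtain a where aPA: "a \<in> PA" and a'a: "a' \<in> sq a \<delta>" using a'A Acov by auto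
    have e1: "c*x + fst \<theta> = fst a' + real_of_int n" and e2: "c*y + snd \<theta> = snd a' + real_of_int m"
      using eq by (auto simp: prod_eq_iff)
    have a1: "fst a \<le> fst a'" "fst a' \<le> fst a + \<delta>" "snd a \<le> snd a'" "snd a' \<le> snd a + \<delta>"
      using a'a by (auto simp: sq_def)
    have p1: "fst p \<le> x" "x \<le> fst p + s" "snd p \<le> y" "y \<le> snd p + s"
      using zp by (auto simp: sq_def zxy)
    have cx: "c*fst p \<le> c*x" "c*x \<le> c*fst p + c * s" "c * snd p \<le> c*y" "c*y \<le> c * snd p + c * s"
      using p1 c by (auto simp: distrib_left[symmetric] intro: mult_left_mono)
    have nI: "n \<in> I (c*fst p) (fst a) (fst \<theta>)" unfolding I_def using e1 a1 cx by auto
    have mI: "m \<in> I (c * snd p) (snd a) (snd \<theta>)" unfolding I_def using e2 a1 cx by auto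
    have qQ: "F a (n,m) \<in> Q" unfolding Q_def J_def using pP aPA nI mI by blast
    have "(fst a + real_of_int n - fst \<theta>)/c \<le> x" using e1 a1 c by (simp add: divide_le_eq algebra_simps)
    moreover have "x \<le> (fst a + real_of_int n - fst \<theta>)/c + \<delta>/c"
      using e1 a1 c by (simp add: le_divide_eq add_divide_distrib[symmetric] algebra_simps)
    moreover have "(snd a + real_of_int m - snd \<theta>)/c \<le> y" using e2 a1 c by (simp add: divide_le_eq algebra_simps)
    moreover have "y \<le> (snd a + real_of_int m - snd \<theta>)/c + \<delta>/c"
      using e2 a1 c by (simp add: le_divide_eq add_divide_distrib[symmetric] algebra_simps)
    ultimately have "z \<in> sq (F a (n,m)) (\<delta>/c)" by (simp add: sq_def F_def zxy)
    thus "z \<in> (\<Union>q\<in>Q. sq q (\<delta>/c))" using qQ by blast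
  qed
  thus ?thesis using Qfin Qcard by blast
qed

primrec Bs :: "(real \<times> real) set \<Rightarrow> (nat \<Rightarrow> real) \<Rightarrow> (nat \<Rightarrow> real \<times> real) \<Rightarrow> nat \<Rightarrow> nat \<Rightarrow> (real \<times> real) set" where
  "Bs A b \<Theta> K 0 = ({0..1} \<times> {0..1}) \<inter> periodize A"
| "Bs A b \<Theta> K (Suc i) = Bs A b \<Theta> K i \<inter> scaled_shift (periodize A) (b (Suc i * K)) (\<Theta> (Suc i * K))"

lemma An_sub_Bs:
  assumes "K \<ge> 1" "i * K \<le> n"
  shows "A_n A b \<Theta> n \<subseteq> Bs A b \<Theta> K i"
  using assms(2)
proof (induction i)
  case 0 thus ?case by (auto simp: A_n_def)
next
  case (Suc i)
  hence "A_n A b \<Theta> n \<subseteq> Bs A b \<Theta> K i" by simp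
  moreover have "Suc i * K \<in> {1..n}" using Suc.prems assms(1) by (simp add: Suc_le_eq)
  hence "A_n A b \<Theta> n \<subseteq> scaled_shift (periodize A) (b (Suc i * K)) (\<Theta> (Suc i * K))"
    unfolding A_n_def by blast
  ultimately show ?case by simp
qed

lemma growth:
  fixes b :: "nat \<Rightarrow> real"
  assumes bpos: "\<And>n. b n > 0" and bb1: "bb > 1" and ratio: "\<And>n. b (Suc n) / b n \<ge> bb"
  shows "b (m + k) \<ge> bb ^ k * b m"
proof (induction k)
  case 0 thus ?case by simp
next
  case (Suc k)
  have "b (Suc (m + k)) \<ge> bb * b (m + k)"
    using ratio[of "m+k"] bpos[of "m+k"] by (simp add: le_divide_eq)
  moreover have "bb * b (m + k) \<ge> bb * (bb ^ k * b m)"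
    using Suc bb1 by (intro mult_left_mono) auto
  ultimately show ?case by simp
qed

lemma invariant:
  fixes b :: "nat \<Rightarrow> real"
  assumes bpos: "\<And>n. b n > 0" and b0: "b 0 = 1"
    and fPA: "finite PA" and cPA: "card PA \<le> N" and Acov: "A \<subseteq> (\<Union>a\<in>PA. sq a \<delta>)"
    and d0: "0 < \<delta>" and d1: "\<delta> \<le> 1"
    and cs: "\<And>i. b (Suc i * K) * (\<delta> / b (i * K)) \<ge> 2"
    and hN: "4 * real N * \<delta>^2 \<le> q"
  shows "\<exists>Q. finite Q \<and> Bs A b \<Theta> K i \<subseteq> (\<Union>p\<in>Q. sq p (\<delta> / b (i * K))) \<and>
           real (card Q) * (\<delta> / b (i * K))^2 \<le> 9 * real N * \<delta>^2 * q^i"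
proof (induction i)
  case 0
  have X: "{0..1} \<times> {0..1} \<subseteq> (\<Union>p\<in>{(0,0)}. sq p 1)" by (simp add: sq_def)
  have ss: "scaled_shift (periodize A) 1 (0,0) = periodize A" by (auto simp: scaled_shift_def)
  obtain Q where Q: "finite Q" "real (card Q) \<le> real (card {(0::real,0::real)}) * real N * (1 * 1 + 2)^2"
    "({0..1} \<times> {0..1}) \<inter> scaled_shift (periodize A) 1 (0,0) \<subseteq> (\<Union>q\<in>Q. sq q (\<delta>/1))"
    using key[OF fPA cPA Acov d0 d1, of 1 1 "{(0,0)}" "{0..1} \<times> {0..1}" "(0,0)"] X by auto
  have "real (card Q) * \<delta>^2 \<le> (9 * real N) * \<delta>^2"
    using Q(2) by (intro mult_right_mono) auto
  thus ?case using Q(1,3) by (auto simp: ss b0)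
next
  case (Suc i)
  then obtain Q where Q: "finite Q" "Bs A b \<Theta> K i \<subseteq> (\<Union>p\<in>Q. sq p (\<delta> / b (i * K)))"
    "real (card Q) * (\<delta> / b (i * K))^2 \<le> 9 * real N * \<delta>^2 * q^i" by blast
  define c where "c = b (Suc i * K)"
  define s where "s = \<delta> / b (i * K)"
  have c0: "c > 0" using bpos by (simp add: c_def)
  have s0: "s \<ge> 0" using bpos d0 by (simp add: s_def less_imp_le)
  have cs2: "c * s \<ge> 2" using cs by (simp add: c_def s_def)
  obtain Q' where Q': "finite Q'" "real (card Q') \<le> real (card Q) * real N * (c * s + 2)^2"
    "Bs A b \<Theta> K i \<inter> scaled_shift (periodize A) c (\<Theta> (Suc i * K)) \<subseteq> (\<Union>q\<in>Q'. sq q (\<delta>/c))"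
    using key[OF fPA cPA Acov d0 d1 c0 s0 Q(1), of "Bs A b \<Theta> K i" "\<Theta> (Suc i * K)"] Q(2)
    by (auto simp: s_def)
  have sq2: "(c * s + 2)^2 \<le> 4 * (c * s)^2"
  proof -
    have "c * s + 2 \<le> 2 * (c * s)" using cs2 by simp
    hence "(c * s + 2)^2 \<le> (2 * (c * s))^2" using cs2 by (intro power_mono) auto
    thus ?thesis by (simp add: power_mult_distrib)
  qed
  have "real (card Q') * (\<delta>/c)^2 \<le> real (card Q) * real N * (c * s + 2)^2 * (\<delta>/c)^2"
    using Q'(2) by (intro mult_right_mono) auto
  also have "\<dots> \<le> real (card Q) * real N * (4 * (c * s)^2) * (\<delta>/c)^2"
    using sq2 by (intro mult_right_mono mult_left_mono) auto
  also have "\<dots> = (real (card Q) * s^2) * (4 * real N * \<delta>^2)"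
    using c0 by (simp add: power_mult_distrib power_divide field_simps)
  also have "\<dots> \<le> (9 * real N * \<delta>^2 * q^i) * q"
  proof (rule mult_mono)
    show "real (card Q) * s\<^sup>2 \<le> 9 * real N * \<delta>\<^sup>2 * q ^ i" using Q(3) by (simp add: s_def)
    show "4 * real N * \<delta>\<^sup>2 \<le> q" by (rule hN)
    show "0 \<le> 9 * real N * \<delta>\<^sup>2 * q ^ i" using Q(3) by (smt (verit) mult_nonneg_nonneg of_nat_0_le_iff zero_le_power2)
    show "0 \<le> 4 * real N * \<delta>\<^sup>2" by simp
  qed
  finally have "real (card Q') * (\<delta>/c)^2 \<le> 9 * real N * \<delta>^2 * q ^ Suc i" by (simp add: mult_ac)
  thus ?case using Q'(1,3) by (auto simp: c_def)
qed

theorem lemma2p3: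
  fixes b :: "nat \<Rightarrow> real" and bb C :: real
  assumes bpos: "\<And>n. b n > 0" and b0: "b 0 = 1"
    and bb1: "bb > 1" and ratio: "\<And>n. b (Suc n) / b n \<ge> bb"
    and Cpos: "C > 0"
  shows "\<forall>\<epsilon>0 > 0. \<exists>\<delta>0 > 0. \<forall>\<delta>. 0 < \<delta> \<and> \<delta> < \<delta>0 \<longrightarrow>
    (\<forall>A :: (real \<times> real) set. \<forall>N :: nat.
       A \<subseteq> {0..1} \<times> {0..1} \<and> real N \<le> C / \<delta> \<and> covered_by_squares A \<delta> N \<longrightarrow>
       (\<exists>\<gamma> Ct. 0 < \<gamma> \<and> \<gamma> < min 1 (1 / bb + \<epsilon>0) \<and> Ct > 0 \<and>
          (\<forall>\<Theta> :: nat \<Rightarrow> real \<times> real. \<forall>n > 0.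
              leb2 (A_n A b \<Theta> n) < Ct * \<gamma> ^ n)))"
proof (intro allI impI)
  fix \<epsilon>0 :: real assume e0: "\<epsilon>0 > 0"
  define \<rho> where "\<rho> = 1 / bb"
  have r0: "\<rho> > 0" and r1: "\<rho> < 1" using bb1 by (auto simp: \<rho>_def)
  define \<beta> where "\<beta> = min ((1 + \<rho>) / 2) (\<rho> + \<epsilon>0 / 2)"
  have rb: "\<rho> < \<beta>" and b1: "\<beta> < 1" and be: "\<beta> < \<rho> + \<epsilon>0"
    using r1 e0 unfolding \<beta>_def by (simp_all add: min_def)
  have bpos': "\<beta> > 0" using r0 rb by simp
  have "1 < \<beta> / \<rho>" using rb r0 by simp
  then obtain K0 where K0: "8 * C / \<rho> < (\<beta> / \<rho>) ^ K0" using real_arch_pow by blast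
  define \<delta>0 where "\<delta>0 = min 1 (2 * \<rho> ^ K0)"
  have d00: "\<delta>0 > 0" using r0 by (simp add: \<delta>0_def)
  show "\<exists>\<delta>0 > 0. \<forall>\<delta>. 0 < \<delta> \<and> \<delta> < \<delta>0 \<longrightarrow>
    (\<forall>A :: (real \<times> real) set. \<forall>N :: nat.
       A \<subseteq> {0..1} \<times> {0..1} \<and> real N \<le> C / \<delta> \<and> covered_by_squares A \<delta> N \<longrightarrow>
       (\<exists>\<gamma> Ct. 0 < \<gamma> \<and> \<gamma> < min 1 (1 / bb + \<epsilon>0) \<and> Ct > 0 \<and>
          (\<forall>\<Theta> :: nat \<Rightarrow> real \<times> real. \<forall>n > 0.
              leb2 (A_n A b \<Theta> n) < Ct * \<gamma> ^ n)))"
  proof (rule exI[of _ \<delta>0], intro conjI d00 allI impI)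
    fix \<delta> :: real and A :: "(real \<times> real) set" and N :: nat
    assume d: "0 < \<delta> \<and> \<delta> < \<delta>0"
      and AN: "A \<subseteq> {0..1} \<times> {0..1} \<and> real N \<le> C / \<delta> \<and> covered_by_squares A \<delta> N"
    have d0: "0 < \<delta>" and d1: "\<delta> \<le> 1" and d2: "\<delta> < 2 * \<rho> ^ K0" using d by (auto simp: \<delta>0_def)
    from AN have "covered_by_squares A \<delta> N" by simp
    then obtain PA where fPA: "finite PA" and cPA: "card PA \<le> N"
      and Acov0: "A \<subseteq> (\<Union>p\<in>PA. {fst p .. fst p + \<delta>} \<times> {snd p .. snd p + \<delta>})"
      unfolding covered_by_squares_def by blast
    have Acov: "A \<subseteq> (\<Union>a\<in>PA. sq a \<delta>)" using Acov0 by (simp add: sq_def)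
    have NC: "real N * \<delta> \<le> C" using AN d0 by (simp add: le_divide_eq)
    obtain k1 where "\<rho> ^ k1 < \<delta> / 2" using real_arch_pow_inv[of "\<delta>/2" \<rho>] d0 r1 by auto
    hence exk: "\<exists>k. \<rho> ^ k \<le> \<delta> / 2" by (intro exI[of _ k1]) simp
    define K where "K = (LEAST k. \<rho> ^ k \<le> \<delta> / 2)"
    have K1: "\<rho> ^ K \<le> \<delta> / 2" unfolding K_def by (rule LeastI_ex[OF exk])
    have Kmin: "\<rho> ^ k > \<delta> / 2" if "k < K" for k
      using not_less_Least[of k "\<lambda>k. \<rho> ^ k \<le> \<delta> / 2"] that unfolding K_def by simp
    have Kpos: "K \<ge> 1"
    proof (rule ccontr)
      assume "\<not> K \<ge> 1" hence "K = 0" by simp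
      thus False using K1 d1 by simp
    qed
    have KK0: "K > K0"
    proof (rule ccontr)
      assume "\<not> K > K0" hence "K \<le> K0" by simp
      hence "\<rho> ^ K0 \<le> \<rho> ^ K" using r0 r1 by (intro power_decreasing) auto
      thus False using K1 d2 by simp
    qed
    have "\<rho> ^ (K - 1) > \<delta> / 2" using Kmin Kpos by simp
    moreover have "\<rho> ^ K = \<rho> * \<rho> ^ (K - 1)" using Kpos by (cases K) auto
    ultimately have rK: "\<rho> ^ K > \<rho> * (\<delta> / 2)"
      using r0 by (simp add: mult_strict_left_mono)
    have "(\<beta> / \<rho>) ^ K0 \<le> (\<beta> / \<rho>) ^ K"
      using KK0 \<open>1 < \<beta> / \<rho>\<close> by (intro power_increasing) auto
    hence bK: "(\<beta> / \<rho>) ^ K > 8 * C / \<rho>" using K0 by simp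
    have "\<beta> ^ K = \<rho> ^ K * (\<beta> / \<rho>) ^ K" using r0 by (simp add: power_divide)
    also have "\<dots> > (\<rho> * (\<delta> / 2)) * (8 * C / \<rho>)"
      using rK bK r0 d0 Cpos by (intro mult_strict_mono) auto
    also have "(\<rho> * (\<delta> / 2)) * (8 * C / \<rho>) = 4 * C * \<delta>" using r0 by (simp add: field_simps)
    finally have qb: "4 * C * \<delta> < \<beta> ^ K" .
    define q where "q = 4 * C * \<delta>"
    have q0: "q > 0" using Cpos d0 by (simp add: q_def)
    have "\<beta> ^ K \<le> 1" using bpos' b1 by (simp add: power_le_one)
    hence q1: "q < 1" using qb by (simp add: q_def)
    define \<gamma> where "\<gamma> = root K q"
    have g0: "\<gamma> > 0" using q0 Kpos by (simp add: \<gamma>_def)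
    have gK: "\<gamma> ^ K = q" using q0 Kpos by (simp add: \<gamma>_def real_root_pow_pos2)
    have "\<gamma> ^ K < \<beta> ^ K" using gK qb by (simp add: q_def)
    hence gb: "\<gamma> < \<beta>" by (rule power_less_imp_less_base) (use bpos' in simp)
    have g1: "\<gamma> \<le> 1" using gb b1 by simp
    have bbK: "bb ^ K * \<delta> \<ge> 2"
    proof -
      have "\<rho> ^ K = 1 / bb ^ K" by (simp add: \<rho>_def power_one_over)
      hence "1 / bb ^ K \<le> \<delta> / 2" using K1 by simp
      thus ?thesis using bb1 by (simp add: field_simps)
    qed
    have cs: "b (Suc i * K) * (\<delta> / b (i * K)) \<ge> 2" for i
    proof -
      have "b (i * K + K) \<ge> bb ^ K * b (i * K)" using growth[where b=b and bb=bb and m="i * K" and k=K] bpos bb1 ratio by blast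
      hence "b (Suc i * K) / b (i * K) \<ge> bb ^ K" using bpos[of "i*K"] by (simp add: le_divide_eq add.commute)
      hence "b (Suc i * K) / b (i * K) * \<delta> \<ge> bb ^ K * \<delta>" using d0 by (intro mult_right_mono) auto
      thus ?thesis using bbK by simp
    qed
    have hN: "4 * real N * \<delta>^2 \<le> q"
    proof -
      have h: "real N * \<delta> * \<delta> \<le> C * \<delta>" using NC d0 by (intro mult_right_mono) auto
      have "4 * real N * \<delta>^2 = 4 * (real N * \<delta> * \<delta>)" by (simp add: power2_eq_square algebra_simps)
      also have "\<dots> \<le> 4 * (C * \<delta>)" using h by simp
      finally show ?thesis by (simp add: q_def algebra_simps)
    qed
    show "\<exists>\<gamma> Ct. 0 < \<gamma> \<and> \<gamma> < min 1 (1 / bb + \<epsilon>0) \<and> Ct > 0 \<and>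
          (\<forall>\<Theta> :: nat \<Rightarrow> real \<times> real. \<forall>n > 0. leb2 (A_n A b \<Theta> n) < Ct * \<gamma> ^ n)"
    proof -
    have gm: "\<gamma> < min 1 (1 / bb + \<epsilon>0)" using gb b1 be by (simp add: \<rho>_def)
    have three: "(3::real) > 0" by simp
    have main: "\<forall>\<Theta> :: nat \<Rightarrow> real \<times> real. \<forall>n > 0. leb2 (A_n A b \<Theta> n) < 3 * \<gamma> ^ n"
    proof (intro allI impI)
      fix \<Theta> :: "nat \<Rightarrow> real \<times> real" and n :: nat assume "n > 0"
      define i where "i = n div K"
      have iK: "i * K \<le> n" by (simp add: i_def div_times_less_eq_dividend)
      have iK2: "n \<le> Suc i * K"
      proof -
        have "n mod K < K" using Kpos by simp
        moreover have "n = i * K + n mod K" by (simp add: i_def)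
        ultimately show ?thesis by simp
      qed
      obtain Q where Q: "finite Q" "Bs A b \<Theta> K i \<subseteq> (\<Union>p\<in>Q. sq p (\<delta> / b (i * K)))"
        "real (card Q) * (\<delta> / b (i * K))^2 \<le> 9 * real N * \<delta>^2 * q^i"
        using invariant[OF bpos b0 fPA cPA Acov d0 d1 cs hN] by blast
      have "leb2 (A_n A b \<Theta> n) \<le> real (card Q) * (\<delta> / b (i * K))^2"
      proof (rule cover_measure[OF Q(1)])
        show "A_n A b \<Theta> n \<subseteq> (\<Union>p\<in>Q. sq p (\<delta> / b (i * K)))"
          using An_sub_Bs[OF Kpos iK, of A b \<Theta>] Q(2) by blast
        show "0 \<le> \<delta> / b (i * K)" using bpos[of "i * K"] d0 by simp
      qed
      also have "\<dots> \<le> 9 * real N * \<delta>^2 * q^i" by (rule Q(3))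
      also have "\<dots> \<le> (9/4) * q * q^i"
        using hN q0 by (intro mult_right_mono) (auto simp: less_imp_le)
      also have "(9/4) * q * q^i = (9/4) * \<gamma> ^ (Suc i * K)"
      proof -
        have "(9/4) * q * q^i = (9/4) * q ^ Suc i" by simp
        also have "q ^ Suc i = (\<gamma> ^ K) ^ Suc i" by (simp add: gK)
        also have "\<dots> = \<gamma> ^ (Suc i * K)" by (metis power_mult mult.commute)
        finally show ?thesis .
      qed
      also have "\<dots> \<le> (9/4) * \<gamma> ^ n"
        using g0 g1 iK2 by (simp add: power_decreasing)
      also have "\<dots> < 3 * \<gamma> ^ n" using g0 by simp
      finally show "leb2 (A_n A b \<Theta> n) < 3 * \<gamma> ^ n" .
    qed
    show "\<exists>\<gamma> Ct. 0 < \<gamma> \<and> \<gamma> < min 1 (1 / bb + \<epsilon>0) \<and> Ct > 0 \<and>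
          (\<forall>\<Theta> :: nat \<Rightarrow> real \<times> real. \<forall>n > 0. leb2 (A_n A b \<Theta> n) < Ct * \<gamma> ^ n)"
      using g0 gm three main by blast
    qed
  qed
qed

end
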